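(* Let $1\le d<n$ be integers. Then there exists an independent set $\mathcal{A}\subseteq\mathcal{A}(n,d)$ with $|\mathcal{A}|=\binom{n-1}{d}$.
   Context: For integers $1\le d<n$, let $I(n,d)$ be the set of all subsets of $[n]=\{1,\dots,n\}$ of cardinality $d+1$. For $I\in I(n,d)$, let $A_I$ be the set of all $d$-tuples with pairwise distinct entries taken from $I$ (so $|A_I|=(d+1)!$), and let $\mathcal{A}(n,d)=\{A_I : I\in I(n,d)\}$. For $\mathcal{A}\subseteq\mathcal{A}(n,d)$, a $d$-tuple $t$ is called unique with respect to $\mathcal{A}$ if there exists $A\in\mathcal{A}$ with $t\in A$ and $t\notin A'$ for every $A'\in\mathcal{A}\setminus\{A\}$. A set $\mathcal{A}\subseteq\mathcal{A}(n,d)$ is called independent if every nonempty subset of $\mathcal{A}$ has at least one $d$-tuple that is unique with respect to that subset. *)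

theory Defs
  imports Main
begin

definition Iset :: "nat \<Rightarrow> nat \<Rightarrow> nat set set" where
  "Iset n d = {I. I \<subseteq> {1..n} \<and> card I = d + 1}"

definition tuples :: "nat \<Rightarrow> nat set \<Rightarrow> nat list set" where
  "tuples d I = {t. length t = d \<and> distinct t \<and> set t \<subseteq> I}"

definition Afam :: "nat \<Rightarrow> nat \<Rightarrow> nat list set set" where
  "Afam n d = {tuples d I | I. I \<in> Iset n d}"

definition unique_wrt :: "nat list set set \<Rightarrow> nat list \<Rightarrow> bool" where
  "unique_wrt \<A> t \<longleftrightarrow> (\<exists>A\<in>\<A>. t \<in> A \<and> (\<forall>A'\<in>\<A> - {A}. t \<notin> A'))"

definition independent :: "nat list set set \<Rightarrow> bool" where
  "independent \<A> \<longleftrightarrow> (\<forall>\<B>. \<B> \<subseteq> \<A> \<and> \<B> \<noteq> {} \<longrightarrow> (\<exists>t. unique_wrt \<B> t))"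

end

theory Submission
  imports Defs
begin

definition FF :: "nat \<Rightarrow> nat \<Rightarrow> nat set set" where
  "FF n d = {I. I \<subseteq> {1..n} \<and> 1 \<in> I \<and> card I = d + 1}"

definition tl1 :: "nat set \<Rightarrow> nat list" where
  "tl1 I = sorted_list_of_set (I - {1})"

lemma tl1_in: assumes "I \<in> FF n d" shows "tl1 I \<in> tuples d I"
proof -
  have f: "finite I" using assms unfolding FF_def by (auto intro: finite_subset)
  have "card (I - {1}) = d" using assms f unfolding FF_def by auto
  thus ?thesis using f unfolding tuples_def tl1_def by auto
qed

lemma tl1_uniq: assumes "I \<in> FF n d" "I' \<in> FF n d" "tl1 I \<in> tuples d I'"
  shows "I' = I"
proof -
  have f: "finite I" "finite I'" using assms unfolding FF_def by (auto intro: finite_subset)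
  have "set (tl1 I) = I - {1}" using f unfolding tl1_def by auto
  hence "I - {1} \<subseteq> I'" using assms(3) unfolding tuples_def by auto
  moreover have "1 \<in> I'" using assms(2) unfolding FF_def by auto
  ultimately have "I \<subseteq> I'" by auto
  moreover have "card I = card I'" using assms unfolding FF_def by auto
  ultimately show ?thesis using f card_subset_eq by metis
qed

lemma card_FF: assumes "1 \<le> n" shows "card (FF n d) = (n - 1) choose d"
proof -
  have "bij_betw (\<lambda>I. I - {1}) (FF n d) {J. J \<subseteq> {2..n} \<and> card J = d}"
  proof (rule bij_betw_byWitness[where f'="insert 1"])
    show "(\<lambda>I. I - {1}) ` FF n d \<subseteq> {J. J \<subseteq> {2..n} \<and> card J = d}"
    proof
      fix J assume "J \<in> (\<lambda>I. I - {1}) ` FF n d"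
      then obtain I where a: "I \<in> FF n d" and J: "J = I - {1}" by blast
      have f: "finite I" using a unfolding FF_def by (auto intro: finite_subset)
      have "I - {1} \<subseteq> {2..n}" using a unfolding FF_def by (auto simp: subset_iff)
      moreover have "card (I - {1}) = d" using a f unfolding FF_def by auto
      ultimately show "J \<in> {J. J \<subseteq> {2..n} \<and> card J = d}" using J by auto
    qed
    show "insert 1 ` {J. J \<subseteq> {2..n} \<and> card J = d} \<subseteq> FF n d"
    proof
      fix K assume "K \<in> insert 1 ` {J. J \<subseteq> {2..n} \<and> card J = d}"
      then obtain J where a: "J \<subseteq> {2..n}" "card J = d" and K: "K = insert 1 J" by blast
      have f: "finite J" using a by (auto intro: finite_subset)
      have "1 \<notin> J" using a by auto
      thus "K \<in> FF n d" using a f assms K unfolding FF_def by auto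
    qed
    show "\<forall>x\<in>FF n d. insert 1 (x - {1}) = x" unfolding FF_def by auto
    show "\<forall>y\<in>{J. J \<subseteq> {2..n} \<and> card J = d}. insert 1 y - {1} = y" by auto
  qed
  hence "card (FF n d) = card {J. J \<subseteq> {2..n} \<and> card J = d}" by (rule bij_betw_same_card)
  also have "\<dots> = card {2..n} choose d" by (rule n_subsets) simp
  also have "card {2..n} = n - 1" by simp
  finally show ?thesis .
qed

theorem mainTheorem4:
  fixes n d :: nat
  assumes "1 \<le> d" and "d < n"
  shows "\<exists>\<A>. \<A> \<subseteq> Afam n d \<and> independent \<A> \<and> card \<A> = (n - 1) choose d"
proof (intro exI conjI)
  let ?A = "tuples d ` FF n d"
  show "?A \<subseteq> Afam n d" unfolding Afam_def Iset_def FF_def by auto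
  have inj: "inj_on (tuples d) (FF n d)"
  proof
    fix I I' assume a: "I \<in> FF n d" "I' \<in> FF n d" "tuples d I = tuples d I'"
    thus "I = I'" using tl1_in[OF a(1)] tl1_uniq[OF a(1,2)] by auto
  qed
  show "card ?A = (n - 1) choose d" using card_FF[of n d] assms card_image[OF inj] by simp
  show "independent ?A" unfolding independent_def
  proof (intro allI impI)
    fix B assume B: "B \<subseteq> ?A \<and> B \<noteq> {}"
    then obtain I where I: "I \<in> FF n d" "tuples d I \<in> B" by blast
    have "unique_wrt B (tl1 I)" unfolding unique_wrt_def
    proof (intro bexI[OF _ I(2)] conjI ballI)
      show "tl1 I \<in> tuples d I" by (rule tl1_in[OF I(1)])
      fix A' assume "A' \<in> B - {tuples d I}"
      then obtain I' where "I' \<in> FF n d" "A' = tuples d I'" "A' \<noteq> tuples d I" using B by blast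
      thus "tl1 I \<notin> A'" using tl1_uniq[OF I(1)] by auto
    qed
    thus "\<exists>t. unique_wrt B t" by blast
  qed
qed

end
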